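(* For any stationary process over a finite alphabet and every $L\ge2$, $$\mathbf{E}'(L)\le\mathbf{E}(L)\le\mathbf{E}.$$
   Context: $H(L)$ is the Shannon entropy (base 2) of $S_1\cdots S_L$, $H(0)=0$; $h_\mu(L)=H(L)-H(L-1)$; $h_\mu=\lim H(L)/L$; $\mathbf{E}=\sum_{L=1}^\infty[h_\mu(L)-h_\mu]$. Finite-$L$ estimates: $\mathbf{E}(L)=H(L)-L\,h_\mu(L)$; for even $L$, $\mathbf{E}'(L)=I[S_1\cdots S_{L/2};\,S_{L/2+1}\cdots S_L]$ (mutual information between the two halves of an $L$-block), and for odd $L$, $\mathbf{E}'(L)=\mathbf{E}'(L-1)$. *)

theory Defs
  imports "HOL-Probability.Probability"
begin

text \<open>A discrete-time process over the alphabet 's is a family X :: nat => 'a => 's of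
random variables on a probability space M; position i (0-based) corresponds to S_(i+1).\<close>

definition block_prob :: "'a measure \<Rightarrow> (nat \<Rightarrow> 'a \<Rightarrow> 's) \<Rightarrow> nat \<Rightarrow> 's list \<Rightarrow> real" where
  "block_prob M X k w = measure M {\<omega> \<in> space M. \<forall>i<length w. X (k + i) \<omega> = w ! i}"

definition stationary_process :: "'a measure \<Rightarrow> (nat \<Rightarrow> 'a \<Rightarrow> 's) \<Rightarrow> bool" where
  "stationary_process M X \<longleftrightarrow> (\<forall>k w. block_prob M X k w = block_prob M X 0 w)"

definition plogp :: "real \<Rightarrow> real" where
  "plogp p = (if p = 0 then 0 else p * log 2 p)"

definition block_entropy :: "'a measure \<Rightarrow> (nat \<Rightarrow> 'a \<Rightarrow> 's) \<Rightarrow> nat \<Rightarrow> real" where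
  "block_entropy M X L = - (\<Sum>w\<in>{w::'s list. length w = L}. plogp (block_prob M X 0 w))"

definition entropy_gain :: "'a measure \<Rightarrow> (nat \<Rightarrow> 'a \<Rightarrow> 's) \<Rightarrow> nat \<Rightarrow> real" where
  "entropy_gain M X L = block_entropy M X L - block_entropy M X (L - 1)"

definition entropy_rate :: "'a measure \<Rightarrow> (nat \<Rightarrow> 'a \<Rightarrow> 's) \<Rightarrow> real" where
  "entropy_rate M X = lim (\<lambda>L. block_entropy M X L / real L)"

definition excess_entropy :: "'a measure \<Rightarrow> (nat \<Rightarrow> 'a \<Rightarrow> 's) \<Rightarrow> ereal" where
  "excess_entropy M X = (\<Sum>n. ereal (entropy_gain M X (Suc n) - entropy_rate M X))"

definition excess_entropy_est :: "'a measure \<Rightarrow> (nat \<Rightarrow> 'a \<Rightarrow> 's) \<Rightarrow> nat \<Rightarrow> real" where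
  "excess_entropy_est M X L = block_entropy M X L - real L * entropy_gain M X L"

definition halves_mutual_info :: "'a measure \<Rightarrow> (nat \<Rightarrow> 'a \<Rightarrow> 's) \<Rightarrow> nat \<Rightarrow> real" where
  "halves_mutual_info M X m =
     (\<Sum>u\<in>{u::'s list. length u = m}. \<Sum>v\<in>{v::'s list. length v = m}.
        (let puv = block_prob M X 0 (u @ v) in
         if puv = 0 then 0
         else puv * log 2 (puv / (block_prob M X 0 u * block_prob M X m v))))"

definition excess_entropy_est' :: "'a measure \<Rightarrow> (nat \<Rightarrow> 'a \<Rightarrow> 's) \<Rightarrow> nat \<Rightarrow> real" where
  "excess_entropy_est' M X L =
     (if even L then halves_mutual_info M X (L div 2) else halves_mutual_info M X ((L - 1) div 2))"

end

theory Submission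
  imports Defs
begin


lemma blk_sets2:
  fixes X :: "nat \<Rightarrow> 'a \<Rightarrow> 'b" and n k :: nat
  assumes meas: "\<And>i. X i \<in> measurable M (count_space UNIV)"
  shows "{\<omega> \<in> space M. \<forall>i<n. X (k + i) \<omega> = f i} \<in> sets M"
proof (cases "n = 0")
  case True then show ?thesis by simp
next
  case False
  have *: "{\<omega> \<in> space M. X (k + i) \<omega> = f i} \<in> sets M" for i
  proof -
    have e: "{\<omega> \<in> space M. X (k + i) \<omega> = f i} = X (k + i) -` {f i} \<inter> space M" by blast
    have "X (k + i) -` {f i} \<inter> space M \<in> sets M"
      by (rule measurable_sets[OF meas[of "k+i"]]) simp
    then show ?thesis unfolding e .
  qed
  have A: "{\<omega> \<in> space M. \<forall>i\<in>{..<n}. X (k + i) \<omega> = f i} \<in> sets M"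
  proof (rule sets.sets_Collect_finite_All')
    show "finite {..<n}" by simp
    show "{..<n} \<noteq> {}" using False by blast
  qed (rule *)
  have e3: "{\<omega> \<in> space M. \<forall>i\<in>{..<n}. X (k + i) \<omega> = f i} = {\<omega> \<in> space M. \<forall>i<n. X (k + i) \<omega> = f i}"
    by blast
  show ?thesis using A unfolding e3 .
qed

lemma blk_snoc:
  assumes ps: "prob_space M" and fin: "finite (UNIV :: 's set)"
    and meas: "\<And>i. X i \<in> measurable M (count_space UNIV)"
  shows "(\<Sum>c\<in>UNIV. block_prob M X k (w @ [c::'s])) = block_prob M X k w"
proof -
  interpret prob_space M by fact
  let ?A = "\<lambda>c. {\<omega> \<in> space M. \<forall>i<length (w@[c]). X (k + i) \<omega> = (w@[c]) ! i}"
  have eq: "{\<omega> \<in> space M. \<forall>i<length w. X (k + i) \<omega> = w ! i} = (\<Union>c\<in>UNIV. ?A c)"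
  proof (intro set_eqI iffI)
    fix \<omega> assume "\<omega> \<in> {\<omega> \<in> space M. \<forall>i<length w. X (k + i) \<omega> = w ! i}"
    then have sp: "\<omega> \<in> space M" and H: "\<forall>i<length w. X (k + i) \<omega> = w ! i" by auto
    have "\<forall>i<length (w @ [X (k + length w) \<omega>]). X (k + i) \<omega> = (w @ [X (k + length w) \<omega>]) ! i"
    proof (intro allI impI)
      fix i assume i: "i < length (w @ [X (k + length w) \<omega>])"
      show "X (k + i) \<omega> = (w @ [X (k + length w) \<omega>]) ! i"
      proof (cases "i < length w")
        case True then show ?thesis using H[rule_format, of i] by (simp add: nth_append)
      next
        case False then have "i = length w" using i by simp
        then show ?thesis by simp
      qed
    qed
    then show "\<omega> \<in> (\<Union>c\<in>UNIV. ?A c)" using sp by blast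
  next
    fix \<omega> assume "\<omega> \<in> (\<Union>c\<in>UNIV. ?A c)"
    then obtain c where sp: "\<omega> \<in> space M" and H: "\<forall>i<length (w@[c]). X (k + i) \<omega> = (w@[c]) ! i" by blast
    have "\<forall>i<length w. X (k + i) \<omega> = w ! i"
    proof (intro allI impI)
      fix i assume "i < length w"
      then show "X (k + i) \<omega> = w ! i" using H[rule_format, of i] by (simp add: nth_append)
    qed
    then show "\<omega> \<in> {\<omega> \<in> space M. \<forall>i<length w. X (k + i) \<omega> = w ! i}" using sp by blast
  qed
  have disj: "disjoint_family_on ?A UNIV"
    unfolding disjoint_family_on_def
  proof (intro ballI impI)
    fix m n :: 's assume "m \<noteq> n"
    show "?A m \<inter> ?A n = {}"
    proof (intro equalityI subsetI)
      fix \<omega> assume "\<omega> \<in> ?A m \<inter> ?A n"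
      then have A: "\<forall>i<Suc (length w). X (k + i) \<omega> = (w @ [m]) ! i"
         and B: "\<forall>i<Suc (length w). X (k + i) \<omega> = (w @ [n]) ! i" by auto
      have "X (k + length w) \<omega> = (w@[m]) ! length w" "X (k + length w) \<omega> = (w@[n]) ! length w"
        using A[rule_format, of "length w"] B[rule_format, of "length w"] by simp_all
      with \<open>m \<noteq> n\<close> show "\<omega> \<in> {}" by simp
    qed simp
  qed
  moreover have sets: "?A ` UNIV \<subseteq> sets M"
    by (intro image_subsetI blk_sets2 meas)
  have U: "measure M (\<Union>a\<in>UNIV. ?A a) = (\<Sum>a\<in>UNIV. measure M (?A a))"
    by (rule finite_measure_finite_Union[OF fin sets disj])
  have L: "block_prob M X k w = measure M (\<Union>a\<in>UNIV. ?A a)"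
    unfolding block_prob_def by (rule arg_cong[where f="measure M", OF eq])
  have S: "(\<Sum>c\<in>UNIV. block_prob M X k (w @ [c])) = (\<Sum>c\<in>UNIV. measure M (?A c))"
    unfolding block_prob_def by (rule refl)
  show ?thesis by (rule trans[OF S trans[OF U[symmetric] L[symmetric]]])
qed

lemma blk_cons:
  assumes ps: "prob_space M" and fin: "finite (UNIV :: 's set)"
    and meas: "\<And>i. X i \<in> measurable M (count_space UNIV)"
  shows "(\<Sum>a\<in>UNIV. block_prob M X k ((a::'s) # w)) = block_prob M X (Suc k) w"
proof -
  interpret prob_space M by fact
  let ?A = "\<lambda>a. {\<omega> \<in> space M. \<forall>i<length (a#w). X (k + i) \<omega> = (a#w) ! i}"
  have eq: "{\<omega> \<in> space M. \<forall>i<length w. X (Suc k + i) \<omega> = w ! i} = (\<Union>a\<in>UNIV. ?A a)"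
  proof (intro set_eqI iffI)
    fix \<omega> assume "\<omega> \<in> {\<omega> \<in> space M. \<forall>i<length w. X (Suc k + i) \<omega> = w ! i}"
    then have sp: "\<omega> \<in> space M" and H: "\<And>i. i < length w \<Longrightarrow> X (Suc k + i) \<omega> = w ! i" by auto
    have "\<forall>i<length (X k \<omega> # w). X (k + i) \<omega> = (X k \<omega> # w) ! i"
    proof (intro allI impI)
      fix i assume i: "i < length (X k \<omega> # w)"
      show "X (k + i) \<omega> = (X k \<omega> # w) ! i"
      proof (cases i)
        case 0 then show ?thesis by simp
      next
        case (Suc j)
        then have "j < length w" using i by simp
        then show ?thesis using H[of j] Suc by simp
      qed
    qed
    then show "\<omega> \<in> (\<Union>a\<in>UNIV. ?A a)" using sp by blast
  next
    fix \<omega> assume "\<omega> \<in> (\<Union>a\<in>UNIV. ?A a)"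
    then obtain a where sp: "\<omega> \<in> space M" and H: "\<forall>i<length (a#w). X (k + i) \<omega> = (a#w) ! i" by blast
    have "\<forall>i<length w. X (Suc k + i) \<omega> = w ! i"
    proof (intro allI impI)
      fix i assume "i < length w"
      then have "X (k + Suc i) \<omega> = (a#w) ! Suc i" using H[rule_format, of "Suc i"] by simp
      then show "X (Suc k + i) \<omega> = w ! i" by simp
    qed
    then show "\<omega> \<in> {\<omega> \<in> space M. \<forall>i<length w. X (Suc k + i) \<omega> = w ! i}" using sp by blast
  qed
  have disj: "disjoint_family_on ?A UNIV"
    unfolding disjoint_family_on_def
  proof (intro ballI impI)
    fix m n :: 's assume "m \<noteq> n"
    show "?A m \<inter> ?A n = {}"
    proof (intro equalityI subsetI)
      fix \<omega> assume "\<omega> \<in> ?A m \<inter> ?A n"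
      then have A: "\<forall>i<Suc (length w). X (k + i) \<omega> = (m # w) ! i"
         and B: "\<forall>i<Suc (length w). X (k + i) \<omega> = (n # w) ! i" by auto
      have "X (k + 0) \<omega> = (m#w) ! 0" "X (k + 0) \<omega> = (n#w) ! 0"
        using A[rule_format, of 0] B[rule_format, of 0] by simp_all
      with \<open>m \<noteq> n\<close> show "\<omega> \<in> {}" by simp
    qed simp
  qed
  moreover have sets: "?A ` UNIV \<subseteq> sets M"
    by (intro image_subsetI blk_sets2 meas)
  have U: "measure M (\<Union>a\<in>UNIV. ?A a) = (\<Sum>a\<in>UNIV. measure M (?A a))"
    by (rule finite_measure_finite_Union[OF fin sets disj])
  have L: "block_prob M X (Suc k) w = measure M (\<Union>a\<in>UNIV. ?A a)"
    unfolding block_prob_def by (rule arg_cong[where f="measure M", OF eq])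
  have S: "(\<Sum>c\<in>UNIV. block_prob M X k (c # w)) = (\<Sum>c\<in>UNIV. measure M (?A c))"
    unfolding block_prob_def by (rule refl)
  show ?thesis by (rule trans[OF S trans[OF U[symmetric] L[symmetric]]])
qed



locale hseq =
  fixes H :: "nat \<Rightarrow> real"
  assumes H0: "H 0 = 0" and Hnn: "\<And>n. 0 \<le> H n"
    and ssa: "\<And>n. H (Suc (Suc n)) + H n \<le> 2 * H (Suc n)"
begin

definition h :: "nat \<Rightarrow> real" where "h n = H n - H (n - 1)"

lemma h_step: "1 \<le> n \<Longrightarrow> h (Suc n) \<le> h n"
proof -
  assume "1 \<le> n"
  then obtain m where "n = Suc m" by (cases n) auto
  then show ?thesis using ssa[of m] by (simp add: h_def)
qed

lemma h_mono: "1 \<le> j \<Longrightarrow> j \<le> k \<Longrightarrow> h k \<le> h j"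
proof (induction k)
  case 0 then show ?case by simp
next
  case (Suc k)
  show ?case
  proof (cases "j = Suc k")
    case True then show ?thesis by simp
  next
    case False
    then have "j \<le> k" using Suc.prems by simp
    then show ?thesis using Suc.IH Suc.prems h_step[of k] by linarith
  qed
qed

lemma G: "real b * h (a + b) \<le> H (a + b) - H a"
proof (induction b)
  case 0 then show ?case by simp
next
  case (Suc b)
  have e: "H (a + Suc b) - H a = (H (a + b) - H a) + h (a + Suc b)" by (simp add: h_def)
  show ?case
  proof (cases "b = 0")
    case True then show ?thesis by (simp add: h_def)
  next
    case False
    then have "h (a + Suc b) \<le> h (a + b)" using h_step[of "a+b"] by simp
    then have "real b * h (a + Suc b) \<le> real b * h (a + b)" by (simp add: mult_left_mono)
    then show ?thesis using Suc e by (simp add: algebra_simps)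
  qed
qed

lemma G': "1 \<le> a \<Longrightarrow> H (a + b) - H a \<le> real b * h a"
proof (induction b)
  case 0 then show ?case by simp
next
  case (Suc b)
  have e: "H (a + Suc b) - H a = (H (a + b) - H a) + h (a + Suc b)" by (simp add: h_def)
  have "h (a + Suc b) \<le> h a" using h_mono[of a "a + Suc b"] Suc by simp
  then show ?case using Suc e by (simp add: algebra_simps)
qed

definition E :: "nat \<Rightarrow> real" where "E n = H n - real n * h n"

lemma E_step: "1 \<le> n \<Longrightarrow> E n \<le> E (Suc n)"
proof -
  assume n: "1 \<le> n"
  have "h (Suc n) \<le> h n" using h_step[OF n] .
  then have "real n * h (Suc n) \<le> real n * h n" by (simp add: mult_left_mono)
  moreover have "H (Suc n) = H n + h (Suc n)" by (simp add: h_def)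
  ultimately show ?thesis by (simp add: E_def algebra_simps)
qed

lemma part1:
  assumes "2 \<le> L"
  shows "2 * H (L div 2) - H (2 * (L div 2)) \<le> E L"
proof -
  define m where "m = L div 2"
  have m1: "1 \<le> m" using assms unfolding m_def by presburger
  have mm: "2 * m = m + m" by simp
  have g: "real m * h (m + m) \<le> H (m + m) - H m" using G[of m m] .
  have eE: "E (m + m) = H (m + m) - real (m + m) * h (m + m)" by (simp only: E_def)
  have r2: "real (m + m) * h (m + m) = 2 * (real m * h (m + m))" by (simp add: algebra_simps)
  have a: "2 * H m - H (2*m) \<le> E (2*m)"
    unfolding mm using g eE r2 by linarith
  have "E (2*m) \<le> E L"
  proof (cases "even L")
    case True
    then have "2 * m = L" unfolding m_def by presburger
    then show ?thesis by simp
  next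
    case False
    then have "L = Suc (2*m)" unfolding m_def by presburger
    then show ?thesis using E_step[of "2*m"] m1 by simp
  qed
  with a show ?thesis unfolding m_def by linarith
qed

lemma conv: "convergent (\<lambda>n. H n / real n)"
proof -
  let ?f = "\<lambda>n. H (Suc n) / real (Suc n)"
  have dec: "?f (Suc n) \<le> ?f n" for n
  proof (cases n)
    case 0
    then show ?thesis using h_step[of 1] H0 by (simp add: h_def field_simps)
  next
    case (Suc k)
    have "real (Suc n) * h (Suc (Suc n)) \<le> real (Suc n) * h (Suc n)"
      using h_step[of "Suc n"] by (simp add: mult_left_mono)
    moreover have "real (Suc n) * h (Suc n) \<le> H (Suc n)" using G[where a=0 and b="Suc n"] H0 by simp
    moreover have "H (Suc (Suc n)) = H (Suc n) + h (Suc (Suc n))" by (simp add: h_def)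
    ultimately have "real (Suc n) * H (Suc (Suc n)) \<le> real (Suc (Suc n)) * H (Suc n)"
      by (simp add: algebra_simps)
    then show ?thesis by (simp add: field_simps del: of_nat_Suc)
  qed
  have "Bseq ?f"
  proof (rule BseqI'[of _ "?f 0"])
    fix n
    have "?f n \<le> ?f 0"
    proof (induction n)
      case 0 show ?case by simp
    next
      case (Suc n) show ?case using dec[of n] Suc.IH by linarith
    qed
    moreover have "0 \<le> ?f n" using Hnn[of "Suc n"] by simp
    ultimately show "norm (?f n) \<le> ?f 0" by simp
  qed
  moreover have "monoseq ?f"
    unfolding monoseq_Suc using dec by blast
  ultimately have "convergent ?f" by (rule Bseq_monoseq_convergent)
  then show ?thesis using convergent_Suc_iff[where f="\<lambda>n. H n / real n"] by simp
qed

lemma rate_le: assumes k: "1 \<le> k" shows "lim (\<lambda>n. H n / real n) \<le> h k"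
proof -
  have L1: "(\<lambda>n. H n / real n) \<longlonglongrightarrow> lim (\<lambda>n. H n / real n)"
    using conv by (simp add: convergent_LIMSEQ_iff)
  have L2: "(\<lambda>n. (H k - real k * h k) / real n + h k) \<longlonglongrightarrow> 0 + h k"
    by (intro tendsto_add lim_const_over_n tendsto_const)
  have ev: "\<forall>n\<ge>Suc k. H n / real n \<le> (H k - real k * h k) / real n + h k"
  proof (intro allI impI)
    fix n assume n: "Suc k \<le> n"
    then obtain b where b: "n = k + b" by (metis le_Suc_eq le_add_diff_inverse nat_le_linear not_less_eq_eq)
    have "H n - H k \<le> real b * h k" using G'[OF k, of b] b by simp
    then have "H n \<le> (H k - real k * h k) + real n * h k" using b by (simp add: algebra_simps)
    moreover have "0 < real n" using n by simp
    ultimately show "H n / real n \<le> (H k - real k * h k) / real n + h k"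
      by (simp add: field_simps)
  qed
  have "\<exists>N. \<forall>n\<ge>N. H n / real n \<le> (H k - real k * h k) / real n + h k" using ev by blast
  from LIMSEQ_le[OF L1 L2 this] show ?thesis by simp
qed

lemma part2:
  assumes "1 \<le> L"
  shows "ereal (E L) \<le> (\<Sum>n. ereal (h (Suc n) - lim (\<lambda>n. H n / real n)))"
proof -
  define r where "r = lim (\<lambda>n. H n / real n)"
  have tel: "H L = (\<Sum>n<L. h (Suc n))"
  proof (induction L)
    case 0 then show ?case using H0 by simp
  next
    case (Suc L) then show ?case by (simp add: h_def)
  qed
  have "E L = (\<Sum>n<L. h (Suc n) - h L)" by (simp add: E_def tel sum_subtractf)
  also have "\<dots> \<le> (\<Sum>n<L. h (Suc n) - r)"
    using rate_le[OF assms] by (intro sum_mono) (simp add: r_def)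
  finally have "ereal (E L) \<le> ereal (\<Sum>n<L. h (Suc n) - r)" by simp
  also have "\<dots> = (\<Sum>n<L. ereal (h (Suc n) - r))" by simp
  also have "\<dots> \<le> (\<Sum>n. ereal (h (Suc n) - r))"
    by (rule suminf_upper) (use rate_le[of "Suc _"] in \<open>simp add: r_def\<close>)
  finally show ?thesis by (simp add: r_def)
qed

end


lemma plogp_eq: "plogp p = p * log 2 p" by (simp add: plogp_def)

lemma fin_len: "finite (UNIV::'s set) \<Longrightarrow> finite {w::'s list. length w = n}"
  using finite_lists_length_eq[of "UNIV::'s set" n] by simp

lemma sum_len_Suc_cons:
  assumes fin: "finite (UNIV::'s set)"
  shows "(\<Sum>x\<in>{x::'s list. length x = Suc n}. f x) = (\<Sum>a\<in>UNIV. \<Sum>w\<in>{w. length w = n}. f (a#w))"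
proof -
  have img: "{x::'s list. length x = Suc n} = (\<lambda>(a,w). a#w) ` (UNIV \<times> {w. length w = n})"
  proof (intro set_eqI iffI)
    fix x :: "'s list" assume "x \<in> {x. length x = Suc n}"
    then obtain a w where "x = a # w" "length w = n" by (auto simp: length_Suc_conv)
    then show "x \<in> (\<lambda>(a,w). a#w) ` (UNIV \<times> {w. length w = n})" by force
  qed auto
  have inj: "inj_on (\<lambda>(a,w). a#w) (UNIV \<times> {w::'s list. length w = n})"
    by (auto simp: inj_on_def)
  have "(\<Sum>x\<in>{x::'s list. length x = Suc n}. f x) = (\<Sum>p\<in>UNIV \<times> {w. length w = n}. f (fst p # snd p))"
    unfolding img by (subst sum.reindex[OF inj]) (simp add: case_prod_beta)
  also have "\<dots> = (\<Sum>a\<in>UNIV. \<Sum>w\<in>{w. length w = n}. f (a#w))"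
    by (simp add: sum.cartesian_product case_prod_beta)
  finally show ?thesis .
qed

lemma sum_len_Suc_snoc:
  assumes fin: "finite (UNIV::'s set)"
  shows "(\<Sum>x\<in>{x::'s list. length x = Suc n}. f x) = (\<Sum>w\<in>{w. length w = n}. \<Sum>c\<in>UNIV. f (w@[c]))"
proof -
  have img: "{x::'s list. length x = Suc n} = (\<lambda>(w,c). w@[c]) ` ({w. length w = n} \<times> UNIV)"
  proof (intro set_eqI iffI)
    fix x :: "'s list" assume "x \<in> {x. length x = Suc n}"
    then have "x = butlast x @ [last x]" "length (butlast x) = n"
      by (auto intro!: append_butlast_last_id[symmetric])
    then show "x \<in> (\<lambda>(w,c). w@[c]) ` ({w. length w = n} \<times> UNIV)"
      by (intro image_eqI[of _ _ "(butlast x, last x)"]) auto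
  qed auto
  have inj: "inj_on (\<lambda>(w,c). w@[c]) ({w::'s list. length w = n} \<times> UNIV)"
    by (auto simp: inj_on_def)
  have "(\<Sum>x\<in>{x::'s list. length x = Suc n}. f x) = (\<Sum>p\<in>{w. length w = n} \<times> UNIV. f (fst p @ [snd p]))"
    unfolding img by (subst sum.reindex[OF inj]) (simp add: case_prod_beta)
  also have "\<dots> = (\<Sum>w\<in>{w. length w = n}. \<Sum>c\<in>UNIV. f (w@[c]))"
    by (simp add: sum.cartesian_product case_prod_beta)
  finally show ?thesis .
qed

lemma sum_len_append:
  assumes fin: "finite (UNIV::'s set)"
  shows "(\<Sum>u\<in>{u::'s list. length u = m}. \<Sum>v\<in>{v. length v = k}. f (u@v)) = (\<Sum>x\<in>{x::'s list. length x = m + k}. f x)"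
proof -
  have img: "{x::'s list. length x = m + k} = (\<lambda>(u,v). u@v) ` ({u. length u = m} \<times> {v. length v = k})"
  proof (intro set_eqI iffI)
    fix x :: "'s list" assume "x \<in> {x. length x = m + k}"
    then show "x \<in> (\<lambda>(u,v). u@v) ` ({u. length u = m} \<times> {v. length v = k})"
      by (intro image_eqI[of _ _ "(take m x, drop m x)"]) auto
  qed auto
  have inj: "inj_on (\<lambda>(u,v). u@v) ({u::'s list. length u = m} \<times> {v. length v = k})"
    by (auto simp: inj_on_def)
  have "(\<Sum>x\<in>{x::'s list. length x = m + k}. f x) = (\<Sum>p\<in>{u. length u = m} \<times> {v. length v = k}. f (fst p @ snd p))"
    unfolding img by (subst sum.reindex[OF inj]) (simp add: case_prod_beta)
  also have "\<dots> = (\<Sum>u\<in>{u::'s list. length u = m}. \<Sum>v\<in>{v. length v = k}. f (u@v))"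
    by (simp add: sum.cartesian_product case_prod_beta)
  finally show ?thesis by simp
qed

lemma gibbs:
  fixes q s t u :: real
  assumes q: "0 < q" and s: "0 < s" and t: "0 < t" and u: "0 < u"
  shows "(q - s * t / u) / ln 2 \<le> q * (log 2 q + log 2 u - log 2 s - log 2 t)"
proof -
  define x where "x = q * u / (s * t)"
  have x: "0 < x" using q s t u by (simp add: x_def)
  have lx: "log 2 q + log 2 u - log 2 s - log 2 t = log 2 x"
    using q s t u by (simp add: x_def log_mult log_divide)
  have "ln (1/x) \<le> 1/x - 1" using x by (intro ln_le_minus_one) simp
  then have "1 - 1/x \<le> ln x" using x by (simp add: ln_div)
  then have "q * (1 - 1/x) \<le> q * ln x" using q by (simp add: mult_left_mono)
  moreover have "q * (1 - 1/x) = q - s * t / u" using q s t u by (simp add: x_def field_simps)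
  ultimately have "(q - s * t / u) / ln 2 \<le> q * ln x / ln 2" by (simp add: divide_right_mono)
  also have "\<dots> = q * log 2 x" by (simp add: log_def)
  finally show ?thesis using lx by simp
qed


locale blk =
  fixes P :: "'s list \<Rightarrow> real"
  assumes fin: "finite (UNIV::'s set)" and nn: "\<And>w. 0 \<le> P w" and le1: "\<And>w. P w \<le> 1"
    and nil: "P [] = 1"
    and snoc: "\<And>w. (\<Sum>c\<in>UNIV. P (w @ [c])) = P w"
    and cons: "\<And>w. (\<Sum>a\<in>UNIV. P (a # w)) = P w"
begin

definition H :: "nat \<Rightarrow> real" where
  "H n = - (\<Sum>w\<in>{w::'s list. length w = n}. plogp (P w))"

lemma H0: "H 0 = 0"
proof -
  have "{w::'s list. length w = 0} = {[]}" by auto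
  then show ?thesis by (simp add: H_def plogp_def nil)
qed

lemma plogp_nonpos: "plogp (P w) \<le> 0"
proof (cases "P w = 0")
  case True then show ?thesis by (simp add: plogp_def)
next
  case False
  then have p: "0 < P w" using nn[of w] by simp
  then have "log 2 (P w) \<le> 0" using le1[of w] by simp
  then show ?thesis using p by (simp add: plogp_def mult_nonneg_nonpos)
qed

lemma Hnn: "0 \<le> H n"
  unfolding H_def using plogp_nonpos by (simp add: sum_nonpos)

lemma snoc_le: "P (w @ [c]) \<le> P w"
proof -
  have "P (w @ [c]) \<le> (\<Sum>c\<in>UNIV. P (w @ [c]))"
    by (rule member_le_sum) (use nn fin in auto)
  then show ?thesis using snoc by simp
qed

lemma cons_le: "P (a # w) \<le> P w"
proof -
  have "P (a # w) \<le> (\<Sum>a\<in>UNIV. P (a # w))"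
    by (rule member_le_sum) (use nn fin in auto)
  then show ?thesis using cons by simp
qed

lemma app_right: "(\<Sum>v\<in>{v::'s list. length v = k}. P (u @ v)) = P u"
proof (induction k)
  case 0
  have "{v::'s list. length v = 0} = {[]}" by auto
  then show ?case by simp
next
  case (Suc k)
  have "(\<Sum>v\<in>{v::'s list. length v = Suc k}. P (u @ v)) = (\<Sum>w\<in>{w. length w = k}. \<Sum>c\<in>UNIV. P (u @ (w @ [c])))"
    by (rule sum_len_Suc_snoc[OF fin])
  also have "\<dots> = (\<Sum>w\<in>{w. length w = k}. P (u @ w))"
    using snoc by (intro sum.cong) (simp_all flip: append_assoc)
  finally show ?case using Suc.IH by simp
qed

lemma app_left: "(\<Sum>u\<in>{u::'s list. length u = k}. P (u @ v)) = P v"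
proof (induction k)
  case 0
  have "{v::'s list. length v = 0} = {[]}" by auto
  then show ?case by simp
next
  case (Suc k)
  have "(\<Sum>u\<in>{u::'s list. length u = Suc k}. P (u @ v)) = (\<Sum>a\<in>UNIV. \<Sum>u\<in>{u. length u = k}. P ((a # u) @ v))"
    by (rule sum_len_Suc_cons[OF fin])
  also have "\<dots> = (\<Sum>u\<in>{u. length u = k}. \<Sum>a\<in>UNIV. P (a # (u @ v)))"
    by (subst sum.swap) simp
  also have "\<dots> = (\<Sum>u\<in>{u. length u = k}. P (u @ v))"
    using cons by simp
  finally show ?case using Suc.IH by simp
qed

lemma app_right_le: "P (u @ v) \<le> P u"
proof -
  have "P (u @ v) \<le> (\<Sum>v'\<in>{v'::'s list. length v' = length v}. P (u @ v'))"
    by (rule member_le_sum) (use nn fin_len[OF fin] in auto)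
  then show ?thesis using app_right by simp
qed

lemma app_left_le: "P (u @ v) \<le> P v"
proof -
  have "P (u @ v) \<le> (\<Sum>u'\<in>{u'::'s list. length u' = length u}. P (u' @ v))"
    by (rule member_le_sum) (use nn fin_len[OF fin] in auto)
  then show ?thesis using app_left by simp
qed


lemma ssa: "H (Suc (Suc n)) + H n \<le> 2 * H (Suc n)"
proof -
  let ?L = "{w::'s list. length w = n}"
  have fL: "finite ?L" by (rule fin_len[OF fin])
  define T where "T w a c = P (a # w @ [c]) * (log 2 (P (a # w @ [c])) + log 2 (P w) - log 2 (P (a # w)) - log 2 (P (w @ [c])))" for w a c
  define R where "R w a c = (P (a # w @ [c]) - P (a # w) * P (w @ [c]) / P w) / ln 2" for w a c
  have TR: "R w a c \<le> T w a c" for w a c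
  proof (cases "P (a # w @ [c]) = 0")
    case True
    have "0 \<le> P (a # w) * P (w @ [c]) / P w" using nn by simp
    then have X: "0 \<le> P (a # w) * P (w @ [c]) / P w / ln 2" by (rule divide_nonneg_pos) simp
    have "R w a c = - (P (a # w) * P (w @ [c]) / P w / ln 2)" using True by (simp add: R_def)
    then have "R w a c \<le> 0" using X by linarith
    moreover have "T w a c = 0" using True by (simp add: T_def)
    ultimately show ?thesis by simp
  next
    case False
    then have q: "0 < P (a # w @ [c])" using nn[of "a # w @ [c]"] by simp
    have "P ((a # w) @ [c]) \<le> P (a # w)" by (rule snoc_le)
    then have s: "0 < P (a # w)" using q by simp
    have "P (a # (w @ [c])) \<le> P (w @ [c])" by (rule cons_le)
    then have t: "0 < P (w @ [c])" using q by simp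
    have u: "0 < P w" using s cons_le[of a w] by simp
    show ?thesis unfolding R_def T_def by (rule gibbs[OF q s t u])
  qed
  have Rsum: "(\<Sum>a\<in>UNIV. \<Sum>c\<in>UNIV. R w a c) = 0" for w
  proof -
    have e1: "(\<Sum>a\<in>UNIV. \<Sum>c\<in>UNIV. R w a c) = ((\<Sum>a\<in>UNIV. \<Sum>c\<in>UNIV. P (a # w @ [c])) - (\<Sum>a\<in>UNIV. \<Sum>c\<in>UNIV. P (a # w) * P (w @ [c]) / P w)) / ln 2"
      by (simp add: R_def sum_divide_distrib sum_subtractf diff_divide_distrib)
    have e2: "(\<Sum>a\<in>UNIV. \<Sum>c\<in>UNIV. P (a # w @ [c])) = P w"
    proof -
      have "(\<Sum>c\<in>UNIV. P (a # w @ [c])) = P (a # w)" for a using snoc[of "a # w"] by simp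
      then show ?thesis using cons by simp
    qed
    have e3: "(\<Sum>a\<in>UNIV. \<Sum>c\<in>UNIV. P (a # w) * P (w @ [c]) / P w) = (\<Sum>a\<in>UNIV. P (a # w)) * (\<Sum>c\<in>UNIV. P (w @ [c])) / P w"
      by (simp add: sum_product sum_divide_distrib)
    have e4: "(\<Sum>a\<in>UNIV. P (a # w)) * (\<Sum>c\<in>UNIV. P (w @ [c])) / P w = P w"
      using cons snoc by simp
    show ?thesis using e1 e2 e3 e4 by simp
  qed
  define A4 where "A4 w = (\<Sum>a\<in>UNIV. \<Sum>c\<in>UNIV. plogp (P (a # w @ [c])))" for w
  define A3 where "A3 w = plogp (P w)" for w
  define A1 where "A1 w = (\<Sum>a\<in>UNIV. plogp (P (a # w)))" for w
  define A2 where "A2 w = (\<Sum>c\<in>UNIV. plogp (P (w @ [c])))" for w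
  have Tw: "(\<Sum>a\<in>UNIV. \<Sum>c\<in>UNIV. T w a c) = A4 w + A3 w - A1 w - A2 w" for w
  proof -
    let ?q = "\<lambda>a c. P (a # w @ [c])"
    have "(\<Sum>a\<in>UNIV. \<Sum>c\<in>UNIV. T w a c) =
      (\<Sum>a\<in>UNIV. \<Sum>c\<in>UNIV. ?q a c * log 2 (?q a c)) + (\<Sum>a\<in>UNIV. \<Sum>c\<in>UNIV. ?q a c * log 2 (P w))
      - (\<Sum>a\<in>UNIV. \<Sum>c\<in>UNIV. ?q a c * log 2 (P (a # w))) - (\<Sum>a\<in>UNIV. \<Sum>c\<in>UNIV. ?q a c * log 2 (P (w @ [c])))"
      by (simp add: T_def algebra_simps sum.distrib sum_subtractf)
    moreover have "(\<Sum>a\<in>UNIV. \<Sum>c\<in>UNIV. ?q a c * log 2 (?q a c)) = A4 w"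
      by (simp add: A4_def plogp_eq)
    moreover have "(\<Sum>a\<in>UNIV. \<Sum>c\<in>UNIV. ?q a c * log 2 (P w)) = A3 w"
    proof -
      have "(\<Sum>a\<in>UNIV. \<Sum>c\<in>UNIV. ?q a c * log 2 (P w)) = (\<Sum>a\<in>UNIV. \<Sum>c\<in>UNIV. ?q a c) * log 2 (P w)"
        by (simp add: sum_distrib_right)
      also have "(\<Sum>a\<in>UNIV. \<Sum>c\<in>UNIV. ?q a c) = P w"
      proof -
        have "(\<Sum>c\<in>UNIV. P (a # w @ [c])) = P (a # w)" for a using snoc[of "a # w"] by simp
        then show ?thesis using cons by simp
      qed
      finally show ?thesis by (simp add: A3_def plogp_eq)
    qed
    moreover have "(\<Sum>a\<in>UNIV. \<Sum>c\<in>UNIV. ?q a c * log 2 (P (a # w))) = A1 w"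
    proof -
      have "(\<Sum>c\<in>UNIV. ?q a c * log 2 (P (a # w))) = plogp (P (a # w))" for a
      proof -
        have "(\<Sum>c\<in>UNIV. ?q a c * log 2 (P (a # w))) = (\<Sum>c\<in>UNIV. ?q a c) * log 2 (P (a # w))"
          by (simp add: sum_distrib_right)
        also have "(\<Sum>c\<in>UNIV. ?q a c) = P (a # w)" using snoc[of "a # w"] by simp
        finally show ?thesis by (simp add: plogp_eq)
      qed
      then show ?thesis by (simp add: A1_def)
    qed
    moreover have "(\<Sum>a\<in>UNIV. \<Sum>c\<in>UNIV. ?q a c * log 2 (P (w @ [c]))) = A2 w"
    proof -
      have "(\<Sum>a\<in>UNIV. ?q a c * log 2 (P (w @ [c]))) = plogp (P (w @ [c]))" for c
      proof -
        have "(\<Sum>a\<in>UNIV. ?q a c * log 2 (P (w @ [c]))) = (\<Sum>a\<in>UNIV. ?q a c) * log 2 (P (w @ [c]))"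
          by (simp add: sum_distrib_right)
        also have "(\<Sum>a\<in>UNIV. ?q a c) = P (w @ [c])" using cons[of "w @ [c]"] by simp
        finally show ?thesis by (simp add: plogp_eq)
      qed
      then have "(\<Sum>c\<in>UNIV. \<Sum>a\<in>UNIV. ?q a c * log 2 (P (w @ [c]))) = A2 w" by (simp add: A2_def)
      then show ?thesis by (subst sum.swap) simp
    qed
    ultimately show ?thesis by simp
  qed
  have H2: "H (Suc (Suc n)) = - (\<Sum>w\<in>?L. A4 w)"
  proof -
    have "H (Suc (Suc n)) = - (\<Sum>a\<in>UNIV. \<Sum>x\<in>{x. length x = Suc n}. plogp (P (a # x)))"
      unfolding H_def by (subst sum_len_Suc_cons[OF fin]) (rule refl)
    also have "\<dots> = - (\<Sum>a\<in>UNIV. \<Sum>w\<in>?L. \<Sum>c\<in>UNIV. plogp (P (a # w @ [c])))"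
      by (subst sum_len_Suc_snoc[OF fin]) simp
    also have "\<dots> = - (\<Sum>w\<in>?L. A4 w)"
      unfolding A4_def by (subst sum.swap) (rule refl)
    finally show ?thesis .
  qed
  have H1a: "H (Suc n) = - (\<Sum>w\<in>?L. A1 w)"
    unfolding H_def A1_def by (subst sum_len_Suc_cons[OF fin]) (subst sum.swap, rule refl)
  have H1b: "H (Suc n) = - (\<Sum>w\<in>?L. A2 w)"
    unfolding H_def A2_def by (subst sum_len_Suc_snoc[OF fin]) (rule refl)
  have H0': "H n = - (\<Sum>w\<in>?L. A3 w)"
    unfolding H_def A3_def by (rule refl)
  have "0 = (\<Sum>w\<in>?L. \<Sum>a\<in>UNIV. \<Sum>c\<in>UNIV. R w a c)" using Rsum by simp
  also have "\<dots> \<le> (\<Sum>w\<in>?L. \<Sum>a\<in>UNIV. \<Sum>c\<in>UNIV. T w a c)"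
    by (intro sum_mono TR)
  also have "\<dots> = (\<Sum>w\<in>?L. A4 w) + (\<Sum>w\<in>?L. A3 w) - (\<Sum>w\<in>?L. A1 w) - (\<Sum>w\<in>?L. A2 w)"
    by (simp add: Tw sum.distrib sum_subtractf)
  finally show ?thesis using H2 H1a H1b H0' by linarith
qed


lemma mi: "(\<Sum>u\<in>{u::'s list. length u = m}. \<Sum>v\<in>{v::'s list. length v = m}.
    (let puv = P (u @ v) in if puv = 0 then 0 else puv * log 2 (puv / (P u * P v)))) = 2 * H m - H (2 * m)"
proof -
  let ?L = "{u::'s list. length u = m}"
  have tm: "(let puv = P (u @ v) in if puv = 0 then 0 else puv * log 2 (puv / (P u * P v)))
     = P (u @ v) * log 2 (P (u @ v)) - P (u @ v) * log 2 (P u) - P (u @ v) * log 2 (P v)" for u v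
  proof (cases "P (u @ v) = 0")
    case True then show ?thesis by simp
  next
    case False
    then have q: "0 < P (u @ v)" using nn[of "u @ v"] by simp
    have pu: "0 < P u" using q app_right_le[of u v] by simp
    have pv: "0 < P v" using q app_left_le[of u v] by simp
    have lg: "log 2 (P (u @ v) / (P u * P v)) = log 2 (P (u @ v)) - log 2 (P u) - log 2 (P v)"
      using q pu pv by (simp add: log_divide log_mult)
    have "(let puv = P (u @ v) in if puv = 0 then 0 else puv * log 2 (puv / (P u * P v)))
       = P (u @ v) * log 2 (P (u @ v) / (P u * P v))" using False by (simp add: Let_def)
    also have "\<dots> = P (u @ v) * (log 2 (P (u @ v)) - log 2 (P u) - log 2 (P v))" by (simp only: lg)
    finally show ?thesis by (simp only: right_diff_distrib)
  qed
  have s1: "(\<Sum>u\<in>?L. \<Sum>v\<in>?L. P (u @ v) * log 2 (P (u @ v))) = - H (2 * m)"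
  proof -
    have "(\<Sum>u\<in>?L. \<Sum>v\<in>?L. P (u @ v) * log 2 (P (u @ v))) = (\<Sum>x\<in>{x::'s list. length x = m + m}. P x * log 2 (P x))"
      by (rule sum_len_append[OF fin])
    also have "m + m = 2 * m" by simp
    finally show ?thesis by (simp add: H_def plogp_eq)
  qed
  have s2: "(\<Sum>u\<in>?L. \<Sum>v\<in>?L. P (u @ v) * log 2 (P u)) = - H m"
  proof -
    have "(\<Sum>v\<in>?L. P (u @ v) * log 2 (P u)) = plogp (P u)" for u
      using app_right[where k=m and u=u] by (simp add: plogp_eq flip: sum_distrib_right)
    then show ?thesis by (simp add: H_def)
  qed
  have s3: "(\<Sum>u\<in>?L. \<Sum>v\<in>?L. P (u @ v) * log 2 (P v)) = - H m"
  proof -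
    have "(\<Sum>u\<in>?L. P (u @ v) * log 2 (P v)) = plogp (P v)" for v
      using app_left[where k=m and v=v] by (simp add: plogp_eq flip: sum_distrib_right)
    then have "(\<Sum>v\<in>?L. \<Sum>u\<in>?L. P (u @ v) * log 2 (P v)) = - H m" by (simp add: H_def)
    then show ?thesis by (subst sum.swap) simp
  qed
  have "(\<Sum>u\<in>?L. \<Sum>v\<in>?L.
    (let puv = P (u @ v) in if puv = 0 then 0 else puv * log 2 (puv / (P u * P v))))
    = (\<Sum>u\<in>?L. \<Sum>v\<in>?L. P (u @ v) * log 2 (P (u @ v))) - (\<Sum>u\<in>?L. \<Sum>v\<in>?L. P (u @ v) * log 2 (P u))
      - (\<Sum>u\<in>?L. \<Sum>v\<in>?L. P (u @ v) * log 2 (P v))"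
    by (simp only: tm sum_subtractf)
  then show ?thesis using s1 s2 s3 by simp
qed

end

theorem lemma3:
  fixes M :: "'a measure" and X :: "nat \<Rightarrow> 'a \<Rightarrow> 's" and L :: nat
  assumes "prob_space M"
    and "finite (UNIV :: 's set)"
    and "\<And>i. X i \<in> measurable M (count_space UNIV)"
    and "stationary_process M X"
    and "L \<ge> 2"
  shows "excess_entropy_est' M X L \<le> excess_entropy_est M X L
         \<and> ereal (excess_entropy_est M X L) \<le> excess_entropy M X"
proof -
  define P where "P = block_prob M X 0"
  have stat: "\<And>k w. block_prob M X k w = P w"
    using assms(4) unfolding stationary_process_def P_def by simp
  have B: "blk P"
  proof
    show "finite (UNIV :: 's set)" by (rule assms(2))
    show "0 \<le> P w" for w unfolding P_def block_prob_def by simp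
    show "P w \<le> 1" for w unfolding P_def block_prob_def by (rule prob_space.prob_le_1[OF assms(1)])
    show "P [] = 1" unfolding P_def block_prob_def using prob_space.prob_space[OF assms(1)] by simp
    show "(\<Sum>c\<in>UNIV. P (w @ [c])) = P w" for w
      unfolding P_def by (rule blk_snoc[OF assms(1,2,3)])
    show "(\<Sum>a\<in>UNIV. P (a # w)) = P w" for w
      using blk_cons[OF assms(1,2,3), where k=0 and w=w] stat by (simp add: P_def)
  qed
  interpret B: blk P by (rule B)
  have BE: "block_entropy M X n = B.H n" for n
  proof -
    have "B.H n = - (\<Sum>w\<in>{w. length w = n}. plogp (P w))" by (rule B.H_def)
    then show ?thesis by (simp add: block_entropy_def P_def)
  qed
  interpret S: hseq B.H
    by unfold_locales (use B.H0 B.Hnn B.ssa in auto)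
  have gain: "\<And>n. entropy_gain M X n = S.h n" by (simp add: entropy_gain_def S.h_def BE)
  have est: "excess_entropy_est M X L = S.E L" by (simp add: excess_entropy_est_def S.E_def gain BE)
  have HM: "halves_mutual_info M X m = 2 * B.H m - B.H (2 * m)" for m
    unfolding halves_mutual_info_def stat by (rule B.mi)
  have est': "excess_entropy_est' M X L = 2 * B.H (L div 2) - B.H (2 * (L div 2))"
  proof (cases "even L")
    case True then show ?thesis by (simp add: excess_entropy_est'_def HM)
  next
    case False
    then have "(L - 1) div 2 = L div 2" by presburger
    then show ?thesis using False by (simp add: excess_entropy_est'_def HM)
  qed
  have rate: "entropy_rate M X = lim (\<lambda>n. B.H n / real n)"
    by (simp add: entropy_rate_def BE)
  have ee: "excess_entropy M X = (\<Sum>n. ereal (S.h (Suc n) - lim (\<lambda>n. B.H n / real n)))"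
    by (simp add: excess_entropy_def gain rate)
  have p1: "excess_entropy_est' M X L \<le> excess_entropy_est M X L"
    unfolding est est' by (rule S.part1[OF assms(5)])
  have p2: "ereal (excess_entropy_est M X L) \<le> excess_entropy M X"
    unfolding est ee using assms(5) by (intro S.part2) simp
  show ?thesis using p1 p2 by simp
qed

end
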